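(* Let $G=(V_G,E_G)$ be a graph with $N$ vertices such that $\frac{\mathcal{E}(N)}{N}\ge\frac{\mathcal{E}(n)}{n}$ for all $0<n<N$, let $g\ge0$ and $H$ the transverse-field Ising Hamiltonian on $G$. Then $\min_{0\le n<N}\frac{\mathcal{E}(N)-\mathcal{E}(n)}{N-n}=\frac{\mathcal{E}(N)}{N}$, and $$\min_{|\varphi\rangle\text{ stabilizer state}}\langle\varphi|H|\varphi\rangle=\begin{cases}-\mathcal{E}(N)&\text{if } g\le \mathcal{E}(N)/N,\\ -gN&\text{if } g\ge \mathcal{E}(N)/N.\end{cases}$$
   Context: A graph $G=(V_G,E_G)$ is finite, simple and undirected, with $V_G=\{q_0,\dots,q_{N-1}\}$, vertex $q_i$ corresponding to qubit $i$. For $S\subseteq V_G$, $E(S)$ is the set of edges with both endpoints in $S$. The edge-function is $\mathcal{E}(n)=\max\{|E(S)|: S\subseteq V_G,\ |S|\le n\}$ (so $\mathcal{E}(N)=|E_G|$). The transverse-field Ising Hamiltonian on $G$ is $H=-\sum_{\langle q_i,q_j\rangle\in E_G}Z_iZ_j-g\sum_{q_i\in V_G}X_i$; stabilizer states are $N$-qubit states whose stabilizer group consists of $2^N$ Pauli-group elements. *)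

theory Defs
  imports "Jordan_Normal_Form.Matrix"
begin

text \<open>Graphs: vertex set {0..<N} (vertex q_i = qubit i); edges are 2-element subsets.\<close>
definition simple_graph :: "nat \<Rightarrow> nat set set \<Rightarrow> bool" where
  "simple_graph N E \<longleftrightarrow> (\<forall>e\<in>E. e \<subseteq> {0..<N} \<and> card e = 2)"

definition edges_in :: "nat set set \<Rightarrow> nat set \<Rightarrow> nat set set" where
  "edges_in E S = {e \<in> E. e \<subseteq> S}"

definition edge_fun :: "nat \<Rightarrow> nat set set \<Rightarrow> nat \<Rightarrow> nat" where
  "edge_fun N E n = Max {card (edges_in E S) | S. S \<subseteq> {0..<N} \<and> card S \<le> n}"

datatype pauli1 = PI | PX | PY | PZ

fun pauli1_entry :: "pauli1 \<Rightarrow> nat \<Rightarrow> nat \<Rightarrow> complex" where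
  "pauli1_entry PI r c = (if r = c then 1 else 0)"
| "pauli1_entry PX r c = (if r \<noteq> c then 1 else 0)"
| "pauli1_entry PY r c = (if r = c then 0 else if r = 0 then - \<i> else \<i>)"
| "pauli1_entry PZ r c = (if r = c then (if r = 0 then 1 else -1) else 0)"

definition qbit :: "nat \<Rightarrow> nat \<Rightarrow> nat" where
  "qbit k i = k div 2 ^ i mod 2"

text \<open>Tensor product P_0 \<otimes> ... \<otimes> P_{N-1}, written out entrywise.\<close>
definition pauli_string :: "nat \<Rightarrow> (nat \<Rightarrow> pauli1) \<Rightarrow> complex mat" where
  "pauli_string N p = mat (2^N) (2^N)
     (\<lambda>(r, c). \<Prod>i<N. pauli1_entry (p i) (qbit r i) (qbit c i))"

definition pauli_group :: "nat \<Rightarrow> complex mat set" where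
  "pauli_group N = {c \<cdot>\<^sub>m pauli_string N p | c p. c \<in> {1, -1, \<i>, -\<i>}}"

definition stab_group :: "nat \<Rightarrow> complex vec \<Rightarrow> complex mat set" where
  "stab_group N \<phi> = {P \<in> pauli_group N. P *\<^sub>v \<phi> = \<phi>}"

definition is_state :: "nat \<Rightarrow> complex vec \<Rightarrow> bool" where
  "is_state N \<phi> \<longleftrightarrow> \<phi> \<in> carrier_vec (2^N) \<and> \<phi> \<bullet>c \<phi> = 1"

definition stabilizer_state :: "nat \<Rightarrow> complex vec \<Rightarrow> bool" where
  "stabilizer_state N \<phi> \<longleftrightarrow> is_state N \<phi> \<and> card (stab_group N \<phi>) = 2 ^ N"

definition pauli_on :: "nat \<Rightarrow> nat set \<Rightarrow> pauli1 \<Rightarrow> complex mat" where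
  "pauli_on N A P = pauli_string N (\<lambda>k. if k \<in> A then P else PI)"

definition ising_H :: "nat \<Rightarrow> nat set set \<Rightarrow> real \<Rightarrow> complex mat" where
  "ising_H N E g = mat (2^N) (2^N)
     (\<lambda>rc. - (\<Sum>e\<in>E. pauli_on N e PZ $$ rc)
           - complex_of_real g * (\<Sum>i<N. pauli_on N {i} PX $$ rc))"

definition expect :: "complex mat \<Rightarrow> complex vec \<Rightarrow> complex" where
  "expect H \<phi> = (H *\<^sub>v \<phi>) \<bullet>c \<phi>"

end

theory Submission
  imports Defs "HOL-Library.FuncSet"
begin


lemma qbit_lt2: "qbit k i < 2" by (simp add: qbit_def)
lemma qbit_01: "qbit k i = 0 \<or> qbit k i = 1" using qbit_lt2[of k i] by linarith
lemma qbit_0: "qbit k 0 = k mod 2" by (simp add: qbit_def)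
lemma qbit_Suc: "qbit k (Suc i) = qbit (k div 2) i"
  by (simp add: qbit_def div_mult2_eq)
lemma qbit_zero[simp]: "qbit 0 i = 0" by (simp add: qbit_def)

lemma sum_double:
  fixes g :: "nat \<Rightarrow> 'a::comm_monoid_add"
  shows "(\<Sum>c\<in>{0..<2*M}. g c) = (\<Sum>c\<in>{0..<M}. g (2*c) + g (2*c+1))"
proof (induction M)
  case 0 then show ?case by simp
next
  case (Suc M)
  have "{0..<2*Suc M} = insert (2*M+1) (insert (2*M) {0..<2*M})" by auto
  then have "(\<Sum>c\<in>{0..<2*Suc M}. g c) = g (2*M+1) + (g (2*M) + (\<Sum>c\<in>{0..<2*M}. g c))"
    by simp
  then show ?case using Suc by (simp add: add_ac)
qed

lemma bitprod:
  fixes f :: "nat \<Rightarrow> nat \<Rightarrow> 'a::comm_semiring_1"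
  shows "(\<Sum>c\<in>{0..<2^N}. \<Prod>i<N. f i (qbit c i)) = (\<Prod>i<N. f i 0 + f i 1)"
proof (induction N arbitrary: f)
  case 0 then show ?case by simp
next
  case (Suc N)
  have split: "(\<Prod>i<Suc N. f i (qbit c i)) = f 0 (c mod 2) * (\<Prod>i<N. f (Suc i) (qbit (c div 2) i))" for c
    by (simp only: prod.lessThan_Suc_shift qbit_0 qbit_Suc)
  have "(\<Sum>c\<in>{0..<2^Suc N}. \<Prod>i<Suc N. f i (qbit c i))
      = (\<Sum>c\<in>{0..<2^N}. f 0 0 * (\<Prod>i<N. f (Suc i) (qbit c i)) + f 0 1 * (\<Prod>i<N. f (Suc i) (qbit c i)))"
    unfolding split by (simp add: sum_double)
  also have "\<dots> = (f 0 0 + f 0 1) * (\<Sum>c\<in>{0..<2^N}. (\<Prod>i<N. f (Suc i) (qbit c i)))"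
    by (simp add: sum.distrib sum_distrib_left distrib_right)
  also have "\<dots> = (f 0 0 + f 0 1) * (\<Prod>i<N. f (Suc i) 0 + f (Suc i) 1)" using Suc.IH[of "\<lambda>i. f (Suc i)"] by simp
  also have "\<dots> = (\<Prod>i<Suc N. f i 0 + f i 1)" by (simp only: prod.lessThan_Suc_shift)
  finally show ?case .
qed

lemma bits_eq:
  assumes "r < 2^N" "c < 2^N" "\<forall>i<N. qbit r i = qbit c i"
  shows "r = c"
  using assms
proof (induction N arbitrary: r c)
  case 0 then show ?case by simp
next
  case (Suc N)
  have "r div 2 < 2^N" "c div 2 < 2^N" using Suc.prems by auto
  moreover have "\<forall>i<N. qbit (r div 2) i = qbit (c div 2) i" using Suc.prems(3) qbit_Suc by auto
  ultimately have "r div 2 = c div 2" using Suc.IH by blast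
  moreover have "r mod 2 = c mod 2" using Suc.prems(3) qbit_0 by (metis zero_less_Suc)
  ultimately show ?case by (metis div_mult_mod_eq)
qed

lemma pauli1_UNIV: "(UNIV :: pauli1 set) = {PI, PX, PY, PZ}"
  using pauli1.exhaust by auto

fun om :: "pauli1 \<Rightarrow> pauli1 \<Rightarrow> complex" where
  "om PX PY = \<i>" | "om PY PX = - \<i>" | "om PY PZ = \<i>" | "om PZ PY = - \<i>"
| "om PZ PX = \<i>" | "om PX PZ = - \<i>" | "om _ _ = 1"

fun mu :: "pauli1 \<Rightarrow> pauli1 \<Rightarrow> pauli1" where
  "mu PI Q = Q" | "mu P PI = P"
| "mu PX PX = PI" | "mu PY PY = PI" | "mu PZ PZ = PI"
| "mu PX PY = PZ" | "mu PY PX = PZ" | "mu PY PZ = PX" | "mu PZ PY = PX"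
| "mu PZ PX = PY" | "mu PX PZ = PY"

lemma bit_cases: "(a::nat) < 2 \<Longrightarrow> a = 0 \<or> a = 1" by auto

lemma s_mult:
  assumes "a < 2" "c < 2"
  shows "pauli1_entry P a 0 * pauli1_entry Q 0 c + pauli1_entry P a 1 * pauli1_entry Q 1 c
         = om P Q * pauli1_entry (mu P Q) a c"
  using bit_cases[OF assms(1)] bit_cases[OF assms(2)]
  by (cases P; cases Q; auto)

lemma s_herm: "a < 2 \<Longrightarrow> b < 2 \<Longrightarrow> cnj (pauli1_entry P a b) = pauli1_entry P b a"
  by (cases P; auto)

lemma s_orth:
  assumes "a < 2" "b < 2" "a' < 2" "b' < 2"
  shows "(\<Sum>P\<in>UNIV. pauli1_entry P a b * cnj (pauli1_entry P a' b'))
       = (if a = a' \<and> b = b' then 2 else 0)"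
  unfolding pauli1_UNIV
  using bit_cases[OF assms(1)] bit_cases[OF assms(2)] bit_cases[OF assms(3)] bit_cases[OF assms(4)]
  by (auto simp: complex_eq_iff)

lemma s_hs:
  "cnj (pauli1_entry P 0 0) * pauli1_entry Q 0 0 + cnj (pauli1_entry P 0 1) * pauli1_entry Q 0 1
   + (cnj (pauli1_entry P 1 0) * pauli1_entry Q 1 0 + cnj (pauli1_entry P 1 1) * pauli1_entry Q 1 1)
   = (if P = Q then 2 else 0)"
  by (cases P; cases Q; auto simp: complex_eq_iff)

abbreviation PS where "PS N p \<equiv> pauli_string N p"

lemma PS_carrier[simp]: "PS N p \<in> carrier_mat (2^N) (2^N)"
  by (simp add: pauli_string_def)
lemma PS_dim[simp]: "dim_row (PS N p) = 2^N" "dim_col (PS N p) = 2^N"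
  by (simp_all add: pauli_string_def)
lemma PS_idx: "r < 2^N \<Longrightarrow> c < 2^N \<Longrightarrow>
   PS N p $$ (r,c) = (\<Prod>i<N. pauli1_entry (p i) (qbit r i) (qbit c i))"
  by (simp add: pauli_string_def)

lemma PS_restrict: "PS N p = PS N (restrict p {..<N})"
  unfolding pauli_string_def by (intro cong_mat refl) (auto intro!: prod.cong)

lemma PS_mult: "PS N p * PS N q = (\<Prod>i<N. om (p i) (q i)) \<cdot>\<^sub>m PS N (\<lambda>i. mu (p i) (q i))"
proof (rule eq_matI)
  fix r c assume r: "r < dim_row ((\<Prod>i<N. om (p i) (q i)) \<cdot>\<^sub>m PS N (\<lambda>i. mu (p i) (q i)))"
    and c: "c < dim_col ((\<Prod>i<N. om (p i) (q i)) \<cdot>\<^sub>m PS N (\<lambda>i. mu (p i) (q i)))"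
  then have r: "r < 2^N" and c: "c < 2^N" by auto
  have "(PS N p * PS N q) $$ (r,c) = (\<Sum>k\<in>{0..<2^N}. PS N p $$ (r,k) * PS N q $$ (k,c))"
    using r c by (simp add: scalar_prod_def)
  also have "\<dots> = (\<Sum>k\<in>{0..<2^N}. \<Prod>i<N. pauli1_entry (p i) (qbit r i) (qbit k i) * pauli1_entry (q i) (qbit k i) (qbit c i))"
    using r c by (intro sum.cong refl) (simp add: PS_idx prod.distrib)
  also have "\<dots> = (\<Prod>i<N. pauli1_entry (p i) (qbit r i) 0 * pauli1_entry (q i) 0 (qbit c i) + pauli1_entry (p i) (qbit r i) 1 * pauli1_entry (q i) 1 (qbit c i))"
    by (rule bitprod)
  also have "\<dots> = (\<Prod>i<N. om (p i) (q i) * pauli1_entry (mu (p i) (q i)) (qbit r i) (qbit c i))"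
    by (intro prod.cong refl s_mult qbit_lt2)
  also have "\<dots> = ((\<Prod>i<N. om (p i) (q i)) \<cdot>\<^sub>m PS N (\<lambda>i. mu (p i) (q i))) $$ (r,c)"
    using r c by (simp add: PS_idx prod.distrib)
  finally show "(PS N p * PS N q) $$ (r,c) = ((\<Prod>i<N. om (p i) (q i)) \<cdot>\<^sub>m PS N (\<lambda>i. mu (p i) (q i))) $$ (r,c)" .
qed auto

lemma PS_herm: "r < 2^N \<Longrightarrow> c < 2^N \<Longrightarrow> cnj (PS N p $$ (r,c)) = PS N p $$ (c,r)"
  by (simp add: PS_idx s_herm qbit_lt2)

lemma mv_idx: "A \<in> carrier_mat n n \<Longrightarrow> v \<in> carrier_vec n \<Longrightarrow> r < n \<Longrightarrow>
   (A *\<^sub>v v) $ r = (\<Sum>c\<in>{0..<n}. A $$ (r,c) * v $ c)"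
  by (simp add: scalar_prod_def row_def)

lemma cs_def: "v \<in> carrier_vec n \<Longrightarrow> w \<in> carrier_vec n \<Longrightarrow>
   v \<bullet>c w = (\<Sum>r\<in>{0..<n}. v $ r * cnj (w $ r))"
  by (simp add: scalar_prod_def)

lemma EXP: "A \<in> carrier_mat n n \<Longrightarrow> \<phi> \<in> carrier_vec n \<Longrightarrow>
   expect A \<phi> = (\<Sum>r\<in>{0..<n}. \<Sum>c\<in>{0..<n}. A $$ (r,c) * \<phi> $ c * cnj (\<phi> $ r))"
  unfolding expect_def
  by (subst cs_def[of _ n]) (auto simp: scalar_prod_def sum_distrib_right intro!: sum.cong)

lemma herm_adj:
  assumes A: "A \<in> carrier_mat n n" and h: "\<And>r c. r < n \<Longrightarrow> c < n \<Longrightarrow> cnj (A $$ (r,c)) = A $$ (c,r)"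
    and v: "v \<in> carrier_vec n" and w: "w \<in> carrier_vec n"
  shows "(A *\<^sub>v v) \<bullet>c w = v \<bullet>c (A *\<^sub>v w)"
proof -
  have "(A *\<^sub>v v) \<bullet>c w = (\<Sum>r\<in>{0..<n}. \<Sum>c\<in>{0..<n}. A $$ (r,c) * v $ c * cnj (w $ r))"
    using A v w by (subst cs_def[of _ n]) (auto simp: scalar_prod_def sum_distrib_right intro!: sum.cong)
  also have "\<dots> = (\<Sum>c\<in>{0..<n}. \<Sum>r\<in>{0..<n}. A $$ (r,c) * v $ c * cnj (w $ r))"
    by (rule sum.swap)
  also have "\<dots> = v \<bullet>c (A *\<^sub>v w)"
    using A v w h by (subst cs_def[of _ n]) (auto simp: scalar_prod_def sum_distrib_left mult_ac intro!: sum.cong)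
  finally show ?thesis .
qed

lemma cs_smult_left: "v \<in> carrier_vec n \<Longrightarrow> w \<in> carrier_vec n \<Longrightarrow> (a \<cdot>\<^sub>v v) \<bullet>c w = a * (v \<bullet>c w)"
  by (simp add: cs_def[of _ n] sum_distrib_left mult.assoc)
lemma cs_smult_right: "v \<in> carrier_vec n \<Longrightarrow> w \<in> carrier_vec n \<Longrightarrow> v \<bullet>c (a \<cdot>\<^sub>v w) = cnj a * (v \<bullet>c w)"
  by (simp add: cs_def[of _ n] sum_distrib_left mult_ac)

abbreviation Ps :: "nat \<Rightarrow> (nat \<Rightarrow> pauli1) set" where "Ps N \<equiv> PiE {..<N} (\<lambda>_. (UNIV :: pauli1 set))"

lemma fin_pauli1[simp]: "finite (UNIV :: pauli1 set)" by (simp add: pauli1_UNIV)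
lemma fin_Ps[simp]: "finite (Ps N)" by (rule finite_PiE) auto

lemma prod4:
  fixes f g :: "nat \<Rightarrow> nat \<Rightarrow> complex"
  shows "(\<Sum>r\<in>A. \<Sum>c\<in>B. f r c) * (\<Sum>r'\<in>A. \<Sum>c'\<in>B. g r' c')
     = (\<Sum>r\<in>A. \<Sum>c\<in>B. \<Sum>r'\<in>A. \<Sum>c'\<in>B. f r c * g r' c')"
  by (simp only: sum_distrib_right) (simp only: sum_distrib_left)

lemma Klem:
  assumes "r < 2^N" "c < 2^N" "r' < 2^N" "c' < 2^N"
  shows "(\<Sum>p\<in>Ps N. PS N p $$ (r,c) * cnj (PS N p $$ (r',c'))) = (if r = r' \<and> c = c' then 2^N else 0)"
proof -
  have "(\<Sum>p\<in>Ps N. PS N p $$ (r,c) * cnj (PS N p $$ (r',c')))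
     = (\<Sum>p\<in>Ps N. \<Prod>i<N. pauli1_entry (p i) (qbit r i) (qbit c i) * cnj (pauli1_entry (p i) (qbit r' i) (qbit c' i)))"
    using assms by (simp add: PS_idx prod.distrib)
  also have "\<dots> = (\<Prod>i<N. \<Sum>P\<in>UNIV. pauli1_entry P (qbit r i) (qbit c i) * cnj (pauli1_entry P (qbit r' i) (qbit c' i)))"
    by (rule prod_sum_PiE[symmetric]) auto
  also have "\<dots> = (\<Prod>i<N. if qbit r i = qbit r' i \<and> qbit c i = qbit c' i then 2 else 0)"
    by (intro prod.cong refl s_orth qbit_lt2)
  also have "\<dots> = (if r = r' \<and> c = c' then 2^N else 0)"
  proof (cases "r = r' \<and> c = c'")
    case True then show ?thesis by simp
  next
    case False
    then obtain i where "i < N" "\<not> (qbit r i = qbit r' i \<and> qbit c i = qbit c' i)"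
      using bits_eq assms by blast
    then show ?thesis using False by (intro trans[OF prod_zero]) auto
  qed
  finally show ?thesis .
qed

lemma delta2:
  fixes X :: "nat \<Rightarrow> nat \<Rightarrow> complex"
  assumes "r < n" "c < n"
  shows "(\<Sum>r'\<in>{0..<n}. \<Sum>c'\<in>{0..<n}. (if r = r' \<and> c = c' then K else 0) * X r' c') = K * X r c"
proof -
  have i: "(\<Sum>c'\<in>{0..<n}. (if r = r' \<and> c = c' then K else 0) * X r' c')
      = (if r = r' then K * X r' c else 0)" for r'
  proof -
    have "(\<Sum>c'\<in>{0..<n}. (if r = r' \<and> c = c' then K else 0) * X r' c')
      = (\<Sum>c'\<in>{0..<n}. if c = c' then (if r = r' then K * X r' c' else 0) else 0)"
      by (intro sum.cong refl) auto
    also have "\<dots> = (if r = r' then K * X r' c else 0)" using assms by simp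
    finally show ?thesis .
  qed
  have "(\<Sum>r'\<in>{0..<n}. \<Sum>c'\<in>{0..<n}. (if r = r' \<and> c = c' then K else 0) * X r' c')
      = (\<Sum>r'\<in>{0..<n}. if r = r' then K * X r' c else 0)"
    using i by simp
  also have "\<dots> = K * X r c" using assms by simp
  finally show ?thesis .
qed

lemma F1:
  assumes phi: "\<phi> \<in> carrier_vec (2^N)"
  shows "(\<Sum>p\<in>Ps N. expect (PS N p) \<phi> * cnj (expect (PS N p) \<phi>)) = 2^N * (\<phi> \<bullet>c \<phi>)^2"
proof -
  define w where "w r c = \<phi> $ c * cnj (\<phi> $ r)" for r c
  let ?n = "(2::nat)^N"
  have e: "expect (PS N p) \<phi> = (\<Sum>r\<in>{0..<?n}. \<Sum>c\<in>{0..<?n}. PS N p $$ (r,c) * w r c)" for p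
    using phi by (simp add: EXP[of _ ?n] w_def mult.assoc)
  have "(\<Sum>p\<in>Ps N. expect (PS N p) \<phi> * cnj (expect (PS N p) \<phi>))
    = (\<Sum>p\<in>Ps N. \<Sum>r\<in>{0..<?n}. \<Sum>c\<in>{0..<?n}. \<Sum>r'\<in>{0..<?n}. \<Sum>c'\<in>{0..<?n}.
         (PS N p $$ (r,c) * cnj (PS N p $$ (r',c'))) * (w r c * cnj (w r' c')))"
    unfolding e cnj_sum prod4 by (simp add: sum_distrib_left mult_ac)
  also have "\<dots> = (\<Sum>r\<in>{0..<?n}. \<Sum>c\<in>{0..<?n}. \<Sum>r'\<in>{0..<?n}. \<Sum>c'\<in>{0..<?n}.
         (\<Sum>p\<in>Ps N. PS N p $$ (r,c) * cnj (PS N p $$ (r',c'))) * (w r c * cnj (w r' c')))"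
    by (simp only: sum.swap[of _ "Ps N"] sum_distrib_right)
  also have "\<dots> = (\<Sum>r\<in>{0..<?n}. \<Sum>c\<in>{0..<?n}. \<Sum>r'\<in>{0..<?n}. \<Sum>c'\<in>{0..<?n}.
         (if r = r' \<and> c = c' then 2^N else 0) * (w r c * cnj (w r' c')))"
    by (intro sum.cong refl) (simp add: Klem)
  also have "\<dots> = (\<Sum>r\<in>{0..<?n}. \<Sum>c\<in>{0..<?n}. 2^N * (w r c * cnj (w r c)))"
    by (intro sum.cong refl delta2[of _ ?n, where X = "\<lambda>r' c'. w r c * cnj (w r' c')" for r c]) auto
  also have "\<dots> = 2^N * ((\<Sum>c\<in>{0..<?n}. \<phi> $ c * cnj (\<phi> $ c)) * (\<Sum>r\<in>{0..<?n}. \<phi> $ r * cnj (\<phi> $ r)))"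
    by (simp add: w_def sum_distrib_left sum_product mult_ac)
  also have "\<dots> = 2^N * (\<phi> \<bullet>c \<phi>)^2"
    using phi by (simp add: cs_def[of _ ?n] power2_eq_square)
  finally show ?thesis .
qed




abbreviation CC :: "complex set" where "CC \<equiv> {1, -1, \<i>, -\<i>}"

lemma smv: "A \<in> carrier_mat n n \<Longrightarrow> v \<in> carrier_vec n \<Longrightarrow> (c \<cdot>\<^sub>m A) *\<^sub>v v = c \<cdot>\<^sub>v (A *\<^sub>v v)"
  by (rule eq_vecI) (auto simp: scalar_prod_def sum_distrib_left mult_ac)

definition sel :: "nat \<Rightarrow> complex mat \<Rightarrow> (nat \<Rightarrow> pauli1)" where
  "sel N M = restrict (SOME p. \<exists>c\<in>CC. M = c \<cdot>\<^sub>m PS N p) {..<N}"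

lemma sel_Ps: "sel N M \<in> Ps N" by (simp add: sel_def)

lemma sel2:
  assumes M: "M \<in> stab_group N \<phi>" and st: "is_state N \<phi>"
  shows "\<exists>c\<in>CC. M = c \<cdot>\<^sub>m PS N (sel N M) \<and> PS N (sel N M) *\<^sub>v \<phi> = (1/c) \<cdot>\<^sub>v \<phi>
            \<and> expect (PS N (sel N M)) \<phi> = 1/c"
proof -
  define q where "q = sel N M"
  have ex: "\<exists>p. \<exists>c\<in>CC. M = c \<cdot>\<^sub>m PS N p" using M unfolding stab_group_def pauli_group_def by blast
  from someI_ex[OF ex] obtain c where c: "c \<in> CC" and Mc0: "M = c \<cdot>\<^sub>m PS N (SOME p. \<exists>c\<in>CC. M = c \<cdot>\<^sub>m PS N p)"
    by blast
  have eq: "PS N q = PS N (SOME p. \<exists>c\<in>CC. M = c \<cdot>\<^sub>m PS N p)"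
    unfolding q_def sel_def by (rule PS_restrict[symmetric])
  have Mc: "M = c \<cdot>\<^sub>m PS N q" by (rule trans[OF Mc0]) (simp only: eq)
  have phi: "\<phi> \<in> carrier_vec (2^N)" and n1: "\<phi> \<bullet>c \<phi> = 1" using st unfolding is_state_def by blast+
  have fx: "M *\<^sub>v \<phi> = \<phi>" using M unfolding stab_group_def by blast
  have c0: "c \<noteq> 0" using c by auto
  have "c \<cdot>\<^sub>v (PS N q *\<^sub>v \<phi>) = \<phi>" using fx unfolding Mc smv[OF PS_carrier phi] .
  then have "(1/c) \<cdot>\<^sub>v (c \<cdot>\<^sub>v (PS N q *\<^sub>v \<phi>)) = (1/c) \<cdot>\<^sub>v \<phi>" by simp
  then have ev: "PS N q *\<^sub>v \<phi> = (1/c) \<cdot>\<^sub>v \<phi>" using c0 by (simp add: smult_smult_assoc)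
  have "expect (PS N q) \<phi> = 1/c"
    unfolding expect_def ev using phi n1 by (simp add: cs_smult_left[of _ "2^N"])
  then show ?thesis using c Mc ev unfolding q_def by blast
qed

lemma sel_inj: assumes st: "is_state N \<phi>" shows "inj_on (sel N) (stab_group N \<phi>)"
proof
  fix M M' assume M: "M \<in> stab_group N \<phi>" and M': "M' \<in> stab_group N \<phi>" and eq: "sel N M = sel N M'"
  obtain c where c: "M = c \<cdot>\<^sub>m PS N (sel N M)" "expect (PS N (sel N M)) \<phi> = 1/c"
    using sel2[OF M st] by blast
  obtain c' where c': "M' = c' \<cdot>\<^sub>m PS N (sel N M')" "expect (PS N (sel N M')) \<phi> = 1/c'"
    using sel2[OF M' st] by blast
  have "1/c = 1/c'" using c(2) c'(2) eq by simp
  then have cc: "c = c'" by simp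
  have "M = c \<cdot>\<^sub>m PS N (sel N M)" by (rule c(1))
  also have "\<dots> = c' \<cdot>\<^sub>m PS N (sel N M')" using cc eq by simp
  also have "\<dots> = M'" by (rule c'(1)[symmetric])
  finally show "M = M'" .
qed

lemma sel_norm: assumes M: "M \<in> stab_group N \<phi>" and st: "is_state N \<phi>"
  shows "(cmod (expect (PS N (sel N M)) \<phi>))^2 = 1"
proof -
  obtain c where c: "c \<in> CC" "expect (PS N (sel N M)) \<phi> = 1/c" using sel2[OF M st] by blast
  then show ?thesis by (auto simp: norm_divide)
qed

lemma F1r:
  assumes st: "is_state N \<phi>"
  shows "(\<Sum>p\<in>Ps N. (cmod (expect (PS N p) \<phi>))^2) = 2^N"
proof -
  have phi: "\<phi> \<in> carrier_vec (2^N)" and n1: "\<phi> \<bullet>c \<phi> = 1" using st by (auto simp: is_state_def)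
  have "complex_of_real (\<Sum>p\<in>Ps N. (cmod (expect (PS N p) \<phi>))^2)
      = (\<Sum>p\<in>Ps N. expect (PS N p) \<phi> * cnj (expect (PS N p) \<phi>))"
    by (simp only: of_real_sum complex_norm_square)
  also have "\<dots> = 2^N * (\<phi> \<bullet>c \<phi>)^2" by (rule F1[OF phi])
  also have "\<dots> = complex_of_real (2^N)" using n1 by simp
  finally show ?thesis by (simp only: of_real_eq_iff)
qed

lemma card_stab_le: assumes st: "is_state N \<phi>" shows "card (stab_group N \<phi>) \<le> 2^N"
proof -
  let ?T = "sel N ` stab_group N \<phi>"
  have T: "?T \<subseteq> Ps N" using sel_Ps by auto
  have "real (card (stab_group N \<phi>)) = real (card ?T)" using card_image[OF sel_inj[OF st]] by simp
  also have "\<dots> = (\<Sum>p\<in>?T. (cmod (expect (PS N p) \<phi>))^2)"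
  proof -
    have "(\<Sum>p\<in>?T. (cmod (expect (PS N p) \<phi>))^2) = (\<Sum>p\<in>?T. 1)"
      by (rule sum.cong[OF refl]) (use sel_norm[OF _ st] in auto)
    then show ?thesis by simp
  qed
  also have "\<dots> \<le> (\<Sum>p\<in>Ps N. (cmod (expect (PS N p) \<phi>))^2)" by (rule sum_mono2) (use T in auto)
  also have "\<dots> = 2^N" using F1r[OF st] .
  finally show ?thesis by (metis of_nat_le_iff of_nat_numeral of_nat_power)
qed

lemma stab_zero:
  assumes st: "stabilizer_state N \<phi>" and p: "p \<in> Ps N" and nT: "p \<notin> sel N ` stab_group N \<phi>"
  shows "expect (PS N p) \<phi> = 0"
proof -
  let ?T = "sel N ` stab_group N \<phi>"
  let ?f = "\<lambda>p. (cmod (expect (PS N p) \<phi>))^2"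
  have st1: "is_state N \<phi>" and cs: "card (stab_group N \<phi>) = 2^N" using st unfolding stabilizer_state_def by blast+
  have T: "?T \<subseteq> Ps N" using sel_Ps by auto
  have fT: "finite ?T" using finite_subset[OF T fin_Ps] .
  have "real (card (stab_group N \<phi>)) = real (card ?T)" using card_image[OF sel_inj[OF st1]] by simp
  also have "\<dots> = sum ?f ?T"
  proof -
    have "sum ?f ?T = (\<Sum>p\<in>?T. 1)"
      by (rule sum.cong[OF refl]) (use sel_norm[OF _ st1] in auto)
    then show ?thesis by simp
  qed
  finally have sT: "sum ?f ?T = 2^N" using cs by simp
  have "sum ?f (Ps N - ?T) = sum ?f (Ps N) - sum ?f ?T" by (rule sum_diff[OF fin_Ps T])
  then have z: "sum ?f (Ps N - ?T) = 0" using sT F1r[OF st1] by linarith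
  have fin: "finite (Ps N - ?T)" by (rule finite_Diff) (rule fin_Ps)
  have nn: "\<And>x. x \<in> Ps N - ?T \<Longrightarrow> 0 \<le> ?f x" by (rule zero_le_power2)
  have all0: "\<forall>x\<in>Ps N - ?T. ?f x = 0" using iffD1[OF sum_nonneg_eq_0_iff[OF fin nn] z] .
  have pin: "p \<in> Ps N - ?T" using p nT by (rule DiffI)
  have "?f p = 0" using bspec[OF all0 pin] .
  then show ?thesis by simp
qed

lemma stab_eig:
  assumes st: "stabilizer_state N \<phi>"
  shows "expect (PS N p) \<phi> = 0 \<or> (\<exists>l\<in>CC. PS N p *\<^sub>v \<phi> = l \<cdot>\<^sub>v \<phi> \<and> expect (PS N p) \<phi> = l)"
proof -
  have st1: "is_state N \<phi>" using st unfolding stabilizer_state_def by blast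
  let ?q = "restrict p {..<N}"
  have q: "?q \<in> Ps N" by auto
  show ?thesis
  proof (cases "?q \<in> sel N ` stab_group N \<phi>")
    case True
    then obtain M where M: "M \<in> stab_group N \<phi>" and qM: "?q = sel N M" by auto
    obtain c where c: "c \<in> CC" "PS N (sel N M) *\<^sub>v \<phi> = (1/c) \<cdot>\<^sub>v \<phi>" "expect (PS N (sel N M)) \<phi> = 1/c"
      using sel2[OF M st1] by blast
    have l: "1/c \<in> CC" using c(1) by (auto simp: field_simps)
    have e: "PS N p = PS N (sel N M)" using qM PS_restrict[of N p] by simp
    show ?thesis unfolding e using c l by blast
  next
    case False
    have e: "PS N p = PS N ?q" by (rule PS_restrict)
    show ?thesis unfolding e using stab_zero[OF st q False] by simp
  qed
qed



definition Xs :: "nat \<Rightarrow> nat \<Rightarrow> pauli1" where "Xs i = (\<lambda>k. if k \<in> {i} then PX else PI)"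
definition Zs :: "nat set \<Rightarrow> nat \<Rightarrow> pauli1" where "Zs e = (\<lambda>k. if k \<in> e then PZ else PI)"

lemma pauli_on_X: "pauli_on N {i} PX = PS N (Xs i)" by (simp add: pauli_on_def Xs_def)
lemma pauli_on_Z: "pauli_on N e PZ = PS N (Zs e)" by (simp add: pauli_on_def Zs_def)

lemma om_ZX: "om (Zs e k) (Xs i k) = (if k = i \<and> i \<in> e then \<i> else 1)"
  by (auto simp: Zs_def Xs_def)
lemma om_XZ: "om (Xs i k) (Zs e k) = (if k = i \<and> i \<in> e then - \<i> else 1)"
  by (auto simp: Zs_def Xs_def)
lemma mu_comm: "mu (Zs e k) (Xs i k) = mu (Xs i k) (Zs e k)"
  by (auto simp: Zs_def Xs_def)

lemma anticomm:
  assumes "i < N" "i \<in> e"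
  shows "PS N (Zs e) * PS N (Xs i) = \<i> \<cdot>\<^sub>m PS N (\<lambda>k. mu (Xs i k) (Zs e k))"
    and "PS N (Xs i) * PS N (Zs e) = (- \<i>) \<cdot>\<^sub>m PS N (\<lambda>k. mu (Xs i k) (Zs e k))"
  using assms by (simp_all add: PS_mult om_ZX om_XZ mu_comm)

lemma mv_smult: "(A::complex mat) \<in> carrier_mat n n \<Longrightarrow> v \<in> carrier_vec n \<Longrightarrow> A *\<^sub>v (k \<cdot>\<^sub>v v) = k \<cdot>\<^sub>v (A *\<^sub>v v)"
  by (rule mult_mat_vec)

lemma PS_hadj: "v \<in> carrier_vec (2^N) \<Longrightarrow> w \<in> carrier_vec (2^N) \<Longrightarrow>
   (PS N p *\<^sub>v v) \<bullet>c w = v \<bullet>c (PS N p *\<^sub>v w)"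
  by (rule herm_adj[OF PS_carrier]) (simp_all add: PS_herm)

lemma eig_real:
  assumes st: "is_state N \<phi>" and ev: "PS N p *\<^sub>v \<phi> = l \<cdot>\<^sub>v \<phi>"
  shows "cnj l = l"
proof -
  have phi: "\<phi> \<in> carrier_vec (2^N)" and n1: "\<phi> \<bullet>c \<phi> = 1" using st unfolding is_state_def by blast+
  have "l = (l \<cdot>\<^sub>v \<phi>) \<bullet>c \<phi>" using phi n1 by (simp add: cs_smult_left[of _ "2^N"])
  also have "\<dots> = (PS N p *\<^sub>v \<phi>) \<bullet>c \<phi>" by (simp only: ev)
  also have "\<dots> = \<phi> \<bullet>c (PS N p *\<^sub>v \<phi>)" by (rule PS_hadj[OF phi phi])
  also have "\<dots> = \<phi> \<bullet>c (l \<cdot>\<^sub>v \<phi>)" by (simp only: ev)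
  also have "\<dots> = cnj l" using phi n1 by (simp add: cs_smult_right[of _ "2^N"])
  finally show ?thesis by simp
qed

lemma EXCL:
  assumes st: "is_state N \<phi>" and i: "i < N" "i \<in> e"
    and ev: "PS N (Xs i) *\<^sub>v \<phi> = l \<cdot>\<^sub>v \<phi>" and l0: "l \<noteq> 0"
  shows "expect (PS N (Zs e)) \<phi> = 0"
proof -
  have phi: "\<phi> \<in> carrier_vec (2^N)" and n1: "\<phi> \<bullet>c \<phi> = 1" using st unfolding is_state_def by blast+
  let ?X = "PS N (Xs i)" and ?Z = "PS N (Zs e)" and ?W = "PS N (\<lambda>k. mu (Xs i k) (Zs e k))"
  define z where "z = (?Z *\<^sub>v \<phi>) \<bullet>c \<phi>"
  define W where "W = (?W *\<^sub>v \<phi>) \<bullet>c \<phi>"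
  have lr: "cnj l = l" by (rule eig_real[OF st ev])
  have Zphi: "?Z *\<^sub>v \<phi> \<in> carrier_vec (2^N)" by (rule mult_mat_vec_carrier[OF PS_carrier phi])
  have Wphi: "?W *\<^sub>v \<phi> \<in> carrier_vec (2^N)" by (rule mult_mat_vec_carrier[OF PS_carrier phi])
  have "l * z = ((l \<cdot>\<^sub>v (?Z *\<^sub>v \<phi>)) \<bullet>c \<phi>)" unfolding z_def using Zphi phi by (simp add: cs_smult_left[of _ "2^N"])
  also have "\<dots> = (?Z *\<^sub>v (?X *\<^sub>v \<phi>)) \<bullet>c \<phi>" using phi by (simp add: ev mv_smult[OF PS_carrier])
  also have "\<dots> = ((?Z * ?X) *\<^sub>v \<phi>) \<bullet>c \<phi>" using phi by (simp add: assoc_mult_mat_vec[OF PS_carrier PS_carrier phi])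
  also have "\<dots> = \<i> * W" unfolding anticomm(1)[OF i] W_def using phi Wphi
    by (simp add: smv[OF PS_carrier phi] cs_smult_left[of _ "2^N"])
  finally have A: "l * z = \<i> * W" .
  have "l * z = cnj l * z" using lr by simp
  also have "\<dots> = (?Z *\<^sub>v \<phi>) \<bullet>c (l \<cdot>\<^sub>v \<phi>)" unfolding z_def using Zphi phi by (simp add: cs_smult_right[of _ "2^N"])
  also have "\<dots> = (?Z *\<^sub>v \<phi>) \<bullet>c (?X *\<^sub>v \<phi>)" by (simp only: ev)
  also have "\<dots> = (?X *\<^sub>v (?Z *\<^sub>v \<phi>)) \<bullet>c \<phi>" by (rule PS_hadj[OF Zphi phi, symmetric])
  also have "\<dots> = ((?X * ?Z) *\<^sub>v \<phi>) \<bullet>c \<phi>" using phi by (simp add: assoc_mult_mat_vec[OF PS_carrier PS_carrier phi])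
  also have "\<dots> = - \<i> * W" unfolding anticomm(2)[OF i] W_def using phi Wphi
    by (simp add: smv[OF PS_carrier phi] cs_smult_left[of _ "2^N"])
  finally have B: "l * z = - \<i> * W" .
  from A B have "W = 0" by (simp add: complex_eq_iff)
  then have "l * z = 0" using A by simp
  then have "z = 0" using l0 by simp
  then show ?thesis unfolding z_def expect_def .
qed

lemma swap3:
  fixes f :: "'e \<Rightarrow> nat \<Rightarrow> nat \<Rightarrow> complex"
  shows "(\<Sum>r\<in>A. \<Sum>c\<in>B. \<Sum>e\<in>C. f e r c) = (\<Sum>e\<in>C. \<Sum>r\<in>A. \<Sum>c\<in>B. f e r c)"
proof -
  have "(\<Sum>r\<in>A. \<Sum>c\<in>B. \<Sum>e\<in>C. f e r c) = (\<Sum>r\<in>A. \<Sum>e\<in>C. \<Sum>c\<in>B. f e r c)"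
    by (rule sum.cong[OF refl]) (rule sum.swap)
  also have "\<dots> = (\<Sum>e\<in>C. \<Sum>r\<in>A. \<Sum>c\<in>B. f e r c)" by (rule sum.swap)
  finally show ?thesis .
qed

lemma ALG:
  fixes a :: "'e \<Rightarrow> nat \<Rightarrow> nat \<Rightarrow> complex" and b :: "nat \<Rightarrow> nat \<Rightarrow> nat \<Rightarrow> complex"
  shows "(\<Sum>r\<in>A. \<Sum>c\<in>B. (-(\<Sum>e\<in>C. a e r c) - G * (\<Sum>i\<in>D. b i r c)) * w r c)
    = -(\<Sum>e\<in>C. \<Sum>r\<in>A. \<Sum>c\<in>B. a e r c * w r c) - G * (\<Sum>i\<in>D. \<Sum>r\<in>A. \<Sum>c\<in>B. b i r c * w r c)"
proof -
  have "(\<Sum>r\<in>A. \<Sum>c\<in>B. (-(\<Sum>e\<in>C. a e r c) - G * (\<Sum>i\<in>D. b i r c)) * w r c)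
     = (\<Sum>r\<in>A. \<Sum>c\<in>B. (-(\<Sum>e\<in>C. a e r c * w r c) - G * (\<Sum>i\<in>D. b i r c * w r c)))"
  proof (intro sum.cong refl)
    fix r c
    show "(-(\<Sum>e\<in>C. a e r c) - G * (\<Sum>i\<in>D. b i r c)) * w r c
       = -(\<Sum>e\<in>C. a e r c * w r c) - G * (\<Sum>i\<in>D. b i r c * w r c)"
      by (simp only: left_diff_distrib mult_minus_left sum_distrib_right mult.assoc)
  qed
  also have "\<dots> = -(\<Sum>r\<in>A. \<Sum>c\<in>B. \<Sum>e\<in>C. a e r c * w r c) - G * (\<Sum>r\<in>A. \<Sum>c\<in>B. \<Sum>i\<in>D. b i r c * w r c)"
    by (simp add: sum_subtractf sum_negf sum_distrib_left)
  also have "\<dots> = -(\<Sum>e\<in>C. \<Sum>r\<in>A. \<Sum>c\<in>B. a e r c * w r c) - G * (\<Sum>i\<in>D. \<Sum>r\<in>A. \<Sum>c\<in>B. b i r c * w r c)"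
    by (simp only: swap3[of "\<lambda>e r c. a e r c * w r c"] swap3[of "\<lambda>e r c. b e r c * w r c"])
  finally show ?thesis .
qed

lemma H_carrier: "ising_H N E g \<in> carrier_mat (2^N) (2^N)" by (simp add: ising_H_def)

lemma EXPH:
  assumes phi: "\<phi> \<in> carrier_vec (2^N)"
  shows "expect (ising_H N E g) \<phi> = -(\<Sum>e\<in>E. expect (PS N (Zs e)) \<phi>)
            - complex_of_real g * (\<Sum>i<N. expect (PS N (Xs i)) \<phi>)"
proof -
  let ?n = "(2::nat)^N"
  define w where "w r c = \<phi> $ c * cnj (\<phi> $ r)" for r c
  have e1: "expect A \<phi> = (\<Sum>r\<in>{0..<?n}. \<Sum>c\<in>{0..<?n}. A $$ (r,c) * w r c)" if "A \<in> carrier_mat ?n ?n" for A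
    using EXP[OF that phi] by (simp add: w_def mult.assoc)
  have "expect (ising_H N E g) \<phi> = (\<Sum>r\<in>{0..<?n}. \<Sum>c\<in>{0..<?n}. ising_H N E g $$ (r,c) * w r c)"
    by (rule e1[OF H_carrier])
  also have "\<dots> = (\<Sum>r\<in>{0..<?n}. \<Sum>c\<in>{0..<?n}.
       (-(\<Sum>e\<in>E. PS N (Zs e) $$ (r,c)) - complex_of_real g * (\<Sum>i\<in>{..<N}. PS N (Xs i) $$ (r,c))) * w r c)"
    by (intro sum.cong refl) (simp add: ising_H_def pauli_on_X pauli_on_Z)
  also have "\<dots> = -(\<Sum>e\<in>E. expect (PS N (Zs e)) \<phi>) - complex_of_real g * (\<Sum>i<N. expect (PS N (Xs i)) \<phi>)"
    by (simp only: ALG e1[OF PS_carrier])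
  finally show ?thesis .
qed

lemma EF_fin: "finite {card (edges_in E S) | S. S \<subseteq> {0..<N} \<and> card S \<le> n}"
proof -
  have "{card (edges_in E S) | S. S \<subseteq> {0..<N} \<and> card S \<le> n} \<subseteq> (\<lambda>S. card (edges_in E S)) ` Pow {0..<N}"
    by auto
  then show ?thesis by (rule finite_subset) simp
qed

lemma EF_ge: "S \<subseteq> {0..<N} \<Longrightarrow> card S \<le> n \<Longrightarrow> card (edges_in E S) \<le> edge_fun N E n"
  unfolding edge_fun_def by (rule Max_ge[OF EF_fin]) blast

lemma E_fin: "simple_graph N E \<Longrightarrow> finite E"
proof -
  assume "simple_graph N E"
  then have "E \<subseteq> Pow {0..<N}" by (auto simp: simple_graph_def)
  then show ?thesis by (rule finite_subset) simp
qed

lemma EF_N: assumes G: "simple_graph N E" shows "edge_fun N E N = card E"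
proof -
  have fE: "finite E" by (rule E_fin[OF G])
  have eq: "edges_in E {0..<N} = E" using G unfolding edges_in_def simple_graph_def by blast
  have "card E \<le> edge_fun N E N" using EF_ge[of "{0..<N}" N N E] eq by simp
  moreover have "edge_fun N E N \<le> card E"
    unfolding edge_fun_def
  proof (rule Max.boundedI[OF EF_fin])
    have "{} \<subseteq> {0..<N} \<and> card ({}::nat set) \<le> N" by simp
    then show "{card (edges_in E S) |S. S \<subseteq> {0..<N} \<and> card S \<le> N} \<noteq> {}" by blast
    fix a assume "a \<in> {card (edges_in E S) |S. S \<subseteq> {0..<N} \<and> card S \<le> N}"
    then obtain S where "a = card (edges_in E S)" by blast
    moreover have "edges_in E S \<subseteq> E" by (auto simp: edges_in_def)
    ultimately show "a \<le> card E" using fE by (simp add: card_mono)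
  qed
  ultimately show ?thesis by simp
qed

lemma EF_0: assumes G: "simple_graph N E" shows "edge_fun N E 0 = 0"
proof -
  have "edge_fun N E 0 \<le> 0"
    unfolding edge_fun_def
  proof (rule Max.boundedI[OF EF_fin])
    have "{} \<subseteq> {0..<N} \<and> card ({}::nat set) \<le> 0" by simp
    then show "{card (edges_in E S) |S. S \<subseteq> {0..<N} \<and> card S \<le> 0} \<noteq> {}" by blast
    fix a assume "a \<in> {card (edges_in E S) |S. S \<subseteq> {0..<N} \<and> card S \<le> 0}"
    then obtain S where a: "a = card (edges_in E S)" and S: "S \<subseteq> {0..<N}" "card S \<le> 0" by blast
    have "finite S" using S(1) finite_subset by blast
    then have "S = {}" using S(2) by simp
    moreover have "edges_in E {} = {}" using G by (auto simp: edges_in_def simple_graph_def)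
    ultimately show "a \<le> 0" using a by simp
  qed
  then show ?thesis by simp
qed



lemma stab_re_le: assumes st: "stabilizer_state N \<phi>" shows "Re (expect (PS N p) \<phi>) \<le> 1"
  using stab_eig[OF st, of p] by auto

lemma LB:
  assumes st: "stabilizer_state N \<phi>" and G: "simple_graph N E" and g: "g \<ge> 0"
  shows "\<exists>k\<le>N. - real (edge_fun N E (N - k)) - g * real k \<le> Re (expect (ising_H N E g) \<phi>)"
proof -
  have st1: "is_state N \<phi>" using st unfolding stabilizer_state_def by blast
  have phi: "\<phi> \<in> carrier_vec (2^N)" using st1 unfolding is_state_def by blast
  define x where "x i = expect (PS N (Xs i)) \<phi>" for i
  define z where "z e = expect (PS N (Zs e)) \<phi>" for e
  define A where "A = {i \<in> {..<N}. x i \<noteq> 0}"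
  define F where "F = {e \<in> E. e \<inter> A = {}}"
  have fE: "finite E" by (rule E_fin[OF G])
  have AN: "A \<subseteq> {..<N}" unfolding A_def by blast
  have fA: "finite A" using AN finite_subset by blast
  have kN: "card A \<le> N" using card_mono[OF _ AN] by simp
  have H: "Re (expect (ising_H N E g) \<phi>) = -(\<Sum>e\<in>E. Re (z e)) - g * (\<Sum>i<N. Re (x i))"
    unfolding EXPH[OF phi] x_def z_def by (simp add: Re_sum)
  have bx: "(\<Sum>i<N. Re (x i)) \<le> real (card A)"
  proof -
    have "(\<Sum>i<N. Re (x i)) \<le> (\<Sum>i<N. if i \<in> A then 1 else 0)"
    proof (rule sum_mono)
      fix i assume i: "i \<in> {..<N}"
      show "Re (x i) \<le> (if i \<in> A then 1 else 0)"
      proof (cases "i \<in> A")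
        case True then show ?thesis unfolding x_def using stab_re_le[OF st] by simp
      next
        case False then have "x i = 0" using i unfolding A_def by blast
        then show ?thesis using False by simp
      qed
    qed
    also have "\<dots> = (\<Sum>i\<in>{i\<in>{..<N}. i \<in> A}. 1)" by (rule sum.inter_filter[symmetric]) simp
    also have "{i\<in>{..<N}. i \<in> A} = A" using AN by blast
    finally show ?thesis by simp
  qed
  have bz: "(\<Sum>e\<in>E. Re (z e)) \<le> real (card F)"
  proof -
    have "(\<Sum>e\<in>E. Re (z e)) \<le> (\<Sum>e\<in>E. if e \<in> F then 1 else 0)"
    proof (rule sum_mono)
      fix e assume e: "e \<in> E"
      show "Re (z e) \<le> (if e \<in> F then 1 else 0)"
      proof (cases "e \<in> F")
        case True then show ?thesis unfolding z_def using stab_re_le[OF st] by simp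
      next
        case False
        then obtain i where i: "i \<in> e" "i \<in> A" using e unfolding F_def by blast
        then have iN: "i < N" and xi: "x i \<noteq> 0" unfolding A_def by auto
        then obtain l where l: "l \<in> CC" "PS N (Xs i) *\<^sub>v \<phi> = l \<cdot>\<^sub>v \<phi>"
          using stab_eig[OF st, of "Xs i"] unfolding x_def by blast
        have "l \<noteq> 0" using l(1) by auto
        then have "z e = 0" unfolding z_def by (rule EXCL[OF st1 iN i(1) l(2)])
        then show ?thesis using False by simp
      qed
    qed
    also have "\<dots> = (\<Sum>e\<in>{e\<in>E. e \<in> F}. 1)" by (rule sum.inter_filter[symmetric]) (rule fE)
    also have "{e\<in>E. e \<in> F} = F" unfolding F_def by blast
    finally show ?thesis by simp
  qed
  have cF: "card F \<le> edge_fun N E (N - card A)"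
  proof -
    define S where "S = {0..<N} - A"
    have AN': "A \<subseteq> {0..<N}" using AN by auto
    have "F = edges_in E S" using G unfolding F_def edges_in_def S_def simple_graph_def by blast
    moreover have "card S = N - card A" unfolding S_def using card_Diff_subset[OF fA AN'] by simp
    moreover have "S \<subseteq> {0..<N}" unfolding S_def by blast
    ultimately show ?thesis using EF_ge[of S N "N - card A" E] by simp
  qed
  have "g * (\<Sum>i<N. Re (x i)) \<le> g * real (card A)" by (rule mult_left_mono[OF bx g])
  then have "- real (edge_fun N E (N - card A)) - g * real (card A) \<le> Re (expect (ising_H N E g) \<phi>)"
    unfolding H using bz cF by (smt (verit) of_nat_le_iff)
  then show ?thesis using kN by blast
qed

lemma bitprod2:
  fixes f :: "nat \<Rightarrow> nat \<Rightarrow> nat \<Rightarrow> complex"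
  shows "(\<Sum>r\<in>{0..<(2::nat)^N}. \<Sum>c\<in>{0..<(2::nat)^N}. \<Prod>i<N. f i (qbit r i) (qbit c i))
     = (\<Prod>i<N. f i 0 0 + f i 0 1 + (f i 1 0 + f i 1 1))"
proof -
  have "(\<Sum>r\<in>{0..<(2::nat)^N}. \<Sum>c\<in>{0..<(2::nat)^N}. \<Prod>i<N. f i (qbit r i) (qbit c i))
      = (\<Sum>r\<in>{0..<(2::nat)^N}. \<Prod>i<N. f i (qbit r i) 0 + f i (qbit r i) 1)"
    by (intro sum.cong refl) (rule bitprod[of "\<lambda>i b. f i (qbit _ i) b"])
  also have "\<dots> = (\<Prod>i<N. f i 0 0 + f i 0 1 + (f i 1 0 + f i 1 1))"
    by (rule bitprod[of "\<lambda>i a. f i a 0 + f i a 1"])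
  finally show ?thesis .
qed

lemma hs:
  "(\<Sum>r\<in>{0..<(2::nat)^N}. \<Sum>c\<in>{0..<(2::nat)^N}. cnj (PS N p $$ (r,c)) * PS N q $$ (r,c))
   = (\<Prod>i<N. if p i = q i then 2 else 0)"
proof -
  have "(\<Sum>r\<in>{0..<(2::nat)^N}. \<Sum>c\<in>{0..<(2::nat)^N}. cnj (PS N p $$ (r,c)) * PS N q $$ (r,c))
     = (\<Sum>r\<in>{0..<(2::nat)^N}. \<Sum>c\<in>{0..<(2::nat)^N}. \<Prod>i<N. cnj (pauli1_entry (p i) (qbit r i) (qbit c i)) * pauli1_entry (q i) (qbit r i) (qbit c i))"
    by (intro sum.cong refl) (simp add: PS_idx prod.distrib)
  also have "\<dots> = (\<Prod>i<N. cnj (pauli1_entry (p i) 0 0) * pauli1_entry (q i) 0 0 + cnj (pauli1_entry (p i) 0 1) * pauli1_entry (q i) 0 1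
   + (cnj (pauli1_entry (p i) 1 0) * pauli1_entry (q i) 1 0 + cnj (pauli1_entry (p i) 1 1) * pauli1_entry (q i) 1 1))"
    by (rule bitprod2[of "\<lambda>i a b. cnj (pauli1_entry (p i) a b) * pauli1_entry (q i) a b"])
  also have "\<dots> = (\<Prod>i<N. if p i = q i then 2 else 0)"
    by (intro prod.cong refl s_hs)
  finally show ?thesis .
qed

lemma prod_ind:
  fixes N :: nat
  shows "(\<Prod>i<N. if P i then 1 else 0) = (if \<forall>i<N. P i then 1 else (0::complex))"
proof (cases "\<forall>i<N. P i")
  case True then show ?thesis by simp
next
  case False
  then obtain i where i: "i < N" "\<not> P i" by blast
  have "(\<Prod>i<N. if P i then 1 else 0) = (0::complex)"
    by (subst prod_zero_iff) (use i in auto)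
  then show ?thesis using False by simp
qed

lemma PS_inj: "inj_on (PS N) (Ps N)"
proof
  fix p q assume p: "p \<in> Ps N" and q: "q \<in> Ps N" and eq: "PS N p = PS N q"
  have "(\<Prod>i<N. if p i = q i then 2 else 0) = (\<Prod>i<N. if p i = p i then 2 else (0::complex))"
    using hs[of N p q] hs[of N p p] eq by simp
  also have "\<dots> \<noteq> 0" by simp
  finally have nz: "(\<Prod>i<N. if p i = q i then 2 else (0::complex)) \<noteq> 0" .
  have "\<forall>i<N. p i = q i"
  proof (rule ccontr)
    assume "\<not> (\<forall>i<N. p i = q i)"
    then obtain i where "i < N" "p i \<noteq> q i" by blast
    then have "(\<Prod>i<N. if p i = q i then 2 else (0::complex)) = 0" by (intro prod_zero) auto
    then show False using nz by simp
  qed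
  then show "p = q" using p q by (intro PiE_ext[OF p q]) auto
qed

lemma one_smult_PS: "PS N p \<in> pauli_group N"
proof -
  have "PS N p = 1 \<cdot>\<^sub>m PS N p" by (rule eq_matI) auto
  then show ?thesis unfolding pauli_group_def by blast
qed

lemma stab_from_family:
  assumes st: "is_state N \<phi>" and D: "D \<subseteq> Ps N" and cD: "card D = 2^N"
    and fx: "\<And>p. p \<in> D \<Longrightarrow> PS N p *\<^sub>v \<phi> = \<phi>"
  shows "stabilizer_state N \<phi>"
proof -
  have sub: "PS N ` D \<subseteq> stab_group N \<phi>" using fx one_smult_PS unfolding stab_group_def by blast
  have "sel N ` stab_group N \<phi> \<subseteq> Ps N" using sel_Ps by blast
  then have "finite (sel N ` stab_group N \<phi>)" using finite_subset fin_Ps by blast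
  then have fin: "finite (stab_group N \<phi>)" by (rule finite_imageD[OF _ sel_inj[OF st]])
  have "card (PS N ` D) = 2^N" using card_image[OF inj_on_subset[OF PS_inj D]] cD by simp
  then have "2^N \<le> card (stab_group N \<phi>)" using card_mono[OF fin sub] by simp
  then show ?thesis using card_stab_le[OF st] st unfolding stabilizer_state_def by simp
qed

abbreviation v0 :: "nat \<Rightarrow> complex vec" where "v0 N \<equiv> unit_vec (2^N) 0"

lemma delta_r: "0 < (n::nat) \<Longrightarrow> (\<Sum>c\<in>{0..<n}. f c * (if c = 0 then 1 else 0)) = (f 0 :: complex)"
proof -
  assume n: "0 < n"
  have "(\<Sum>c\<in>{0..<n}. f c * (if c = 0 then 1 else 0)) = (\<Sum>c\<in>{0..<n}. if c = 0 then f c else 0)"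
    by (intro sum.cong refl) simp
  also have "\<dots> = f 0" using n by simp
  finally show ?thesis .
qed

lemma v0_idx: "c < 2^N \<Longrightarrow> v0 N $ c = (if c = 0 then 1 else 0)" by simp
lemma v0_cidx: "c < 2^N \<Longrightarrow> cnj (v0 N $ c) = (if c = 0 then 1 else 0)" by simp

lemma v0_state: "is_state N (v0 N)"
proof -
  have "v0 N \<bullet>c v0 N = (\<Sum>r\<in>{0..<(2::nat)^N}. v0 N $ r * cnj (v0 N $ r))" by (rule cs_def) simp_all
  also have "\<dots> = (\<Sum>r\<in>{0..<(2::nat)^N}. 1 * (if r = 0 then 1 else 0))"
    by (intro sum.cong refl) (simp add: v0_cidx)
  also have "\<dots> = 1" by (rule delta_r) simp
  finally show ?thesis unfolding is_state_def by simp
qed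

lemma exp0: assumes A: "A \<in> carrier_mat (2^N) (2^N)" shows "expect A (v0 N) = A $$ (0,0)"
proof -
  have "expect A (v0 N) = (\<Sum>r\<in>{0..<(2::nat)^N}. \<Sum>c\<in>{0..<(2::nat)^N}. A $$ (r,c) * v0 N $ c * cnj (v0 N $ r))"
    by (rule EXP[OF A]) simp
  also have "\<dots> = (\<Sum>r\<in>{0..<(2::nat)^N}. A $$ (r,0) * (if r = 0 then 1 else 0))"
  proof (intro sum.cong refl)
    fix r assume r: "r \<in> {0..<(2::nat)^N}"
    have c1: "(\<Sum>c\<in>{0..<(2::nat)^N}. A $$ (r,c) * (if c = 0 then 1 else 0)) = A $$ (r,0)"
      by (rule delta_r) simp
    have c2: "cnj (v0 N $ r) = (if r = 0 then 1 else 0)" using r by (intro v0_cidx) simp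
    have "(\<Sum>c\<in>{0..<(2::nat)^N}. A $$ (r,c) * v0 N $ c * cnj (v0 N $ r))
        = (\<Sum>c\<in>{0..<(2::nat)^N}. A $$ (r,c) * (if c = 0 then 1 else 0)) * cnj (v0 N $ r)"
      by (simp add: sum_distrib_right v0_idx)
    then show "(\<Sum>c\<in>{0..<(2::nat)^N}. A $$ (r,c) * v0 N $ c * cnj (v0 N $ r)) = A $$ (r,0) * (if r = 0 then 1 else 0)"
      unfolding c1 c2 .
  qed
  also have "\<dots> = A $$ (0,0)" by (rule delta_r) simp
  finally show ?thesis .
qed

lemma e_IZ: "P \<in> {PI, PZ} \<Longrightarrow> pauli1_entry P a 0 = (if a = 0 then 1 else 0)"
  by auto

lemma fix0:
  assumes p: "\<And>i. i < N \<Longrightarrow> p i \<in> {PI, PZ}"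
  shows "PS N p *\<^sub>v v0 N = v0 N"
proof (rule eq_vecI)
  fix r assume "r < dim_vec (v0 N)"
  then have r: "r < 2^N" by simp
  have "(PS N p *\<^sub>v v0 N) $ r = (\<Sum>c\<in>{0..<(2::nat)^N}. PS N p $$ (r,c) * v0 N $ c)"
    by (rule mv_idx[OF PS_carrier unit_vec_carrier r])
  also have "\<dots> = (\<Sum>c\<in>{0..<(2::nat)^N}. PS N p $$ (r,c) * (if c = 0 then 1 else 0))"
  proof (intro sum.cong refl)
    fix c assume "c \<in> {0..<(2::nat)^N}"
    then have "c < 2^N" by simp
    then show "PS N p $$ (r,c) * v0 N $ c = PS N p $$ (r,c) * (if c = 0 then 1 else 0)"
      by (simp only: v0_idx)
  qed
  also have "\<dots> = PS N p $$ (r,0)" by (rule delta_r) simp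
  also have "\<dots> = (\<Prod>i<N. pauli1_entry (p i) (qbit r i) 0)"
    using r by (simp add: PS_idx)
  also have "\<dots> = (\<Prod>i<N. if qbit r i = 0 then 1 else 0)"
    by (intro prod.cong refl e_IZ p) simp
  also have "\<dots> = (if \<forall>i<N. qbit r i = 0 then 1 else 0)" by (rule prod_ind)
  also have "\<dots> = v0 N $ r"
  proof -
    have "(\<forall>i<N. qbit r i = 0) \<longleftrightarrow> r = 0" using bits_eq[of r N 0] r by auto
    then show ?thesis using r by simp
  qed
  finally show "(PS N p *\<^sub>v v0 N) $ r = v0 N $ r" .
qed simp

lemma card_D: "P \<noteq> Q \<Longrightarrow> card (PiE {..<N} (\<lambda>_. {P, Q})) = 2^N"
  by (simp add: card_PiE numeral_2_eq_2)

lemma v0_stab: "stabilizer_state N (v0 N)"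
proof (rule stab_from_family[OF v0_state _ card_D[of PI PZ N]])
  show "PiE {..<N} (\<lambda>_. {PI, PZ}) \<subseteq> Ps N" by (auto simp: PiE_def)
  fix p assume "p \<in> PiE {..<N} (\<lambda>_. {PI, PZ})"
  then have "\<And>i. i < N \<Longrightarrow> p i \<in> {PI, PZ}" by auto
  then show "PS N p *\<^sub>v v0 N = v0 N" by (rule fix0)
qed simp

lemma v0_energy: "expect (ising_H N E g) (v0 N) = - of_nat (card E)"
proof -
  have z: "expect (PS N (Zs e)) (v0 N) = 1" for e
  proof -
    have "expect (PS N (Zs e)) (v0 N) = (\<Prod>k<N. pauli1_entry (Zs e k) 0 0)" by (simp add: exp0 PS_idx)
    also have "\<dots> = 1" by (rule prod.neutral) (simp add: Zs_def)
    finally show ?thesis .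
  qed
  have x: "expect (PS N (Xs i)) (v0 N) = 0" if "i < N" for i
  proof -
    have "expect (PS N (Xs i)) (v0 N) = (\<Prod>k<N. pauli1_entry (Xs i k) 0 0)" by (simp add: exp0 PS_idx)
    also have "\<dots> = 0" by (subst prod_zero_iff) (use that in \<open>auto simp: Xs_def\<close>)
    finally show ?thesis .
  qed
  show ?thesis unfolding EXPH[OF unit_vec_carrier] using x by (simp add: z)
qed

definition sP :: "nat \<Rightarrow> complex" where "sP N = complex_of_real (1 / sqrt (2^N))"
definition vP :: "nat \<Rightarrow> complex vec" where "vP N = vec (2^N) (\<lambda>_. sP N)"

lemma sP_sq: "sP N * cnj (sP N) = 1 / 2^N"
proof -
  have "(1 / sqrt (2^N)) * (1 / sqrt (2^N)) = (1::real) / 2^N" by simp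
  then have "sP N * cnj (sP N) = complex_of_real (1 / 2^N)"
    by (simp only: sP_def complex_cnj_complex_of_real of_real_mult[symmetric])
  then show ?thesis by simp
qed

lemma vP_carrier: "vP N \<in> carrier_vec (2^N)" by (simp add: vP_def)

lemma vP_idx: "r < 2^N \<Longrightarrow> vP N $ r = sP N" by (simp add: vP_def)

lemma vP_state: "is_state N (vP N)"
proof -
  have "vP N \<bullet>c vP N = (\<Sum>r\<in>{0..<(2::nat)^N}. vP N $ r * cnj (vP N $ r))" by (rule cs_def[OF vP_carrier vP_carrier])
  also have "\<dots> = (\<Sum>r\<in>{0..<(2::nat)^N}. sP N * cnj (sP N))" by (intro sum.cong refl) (simp add: vP_idx)
  also have "\<dots> = of_nat (2^N) * (1 / 2^N)" by (simp only: sum_constant card_atLeastLessThan sP_sq) simp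
  also have "\<dots> = 1" by simp
  finally show ?thesis unfolding is_state_def using vP_carrier by simp
qed

lemma expP: assumes A: "A \<in> carrier_mat (2^N) (2^N)" shows
   "expect A (vP N) = (1 / 2^N) * (\<Sum>r\<in>{0..<(2::nat)^N}. \<Sum>c\<in>{0..<(2::nat)^N}. A $$ (r,c))"
proof -
  have "expect A (vP N) = (\<Sum>r\<in>{0..<(2::nat)^N}. \<Sum>c\<in>{0..<(2::nat)^N}. A $$ (r,c) * vP N $ c * cnj (vP N $ r))"
    by (rule EXP[OF A vP_carrier])
  also have "\<dots> = (\<Sum>r\<in>{0..<(2::nat)^N}. \<Sum>c\<in>{0..<(2::nat)^N}. (sP N * cnj (sP N)) * A $$ (r,c))"
    by (intro sum.cong refl) (simp add: vP_idx mult_ac)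
  also have "\<dots> = (sP N * cnj (sP N)) * (\<Sum>r\<in>{0..<(2::nat)^N}. \<Sum>c\<in>{0..<(2::nat)^N}. A $$ (r,c))"
    by (simp only: sum_distrib_left)
  also have "\<dots> = (1 / 2^N) * (\<Sum>r\<in>{0..<(2::nat)^N}. \<Sum>c\<in>{0..<(2::nat)^N}. A $$ (r,c))"
    by (simp only: sP_sq)
  finally show ?thesis .
qed

lemma e_IX: "P \<in> {PI, PX} \<Longrightarrow> a < 2 \<Longrightarrow> pauli1_entry P a 0 + pauli1_entry P a 1 = 1"
  using bit_cases[of a] by auto

lemma fixP:
  assumes p: "\<And>i. i < N \<Longrightarrow> p i \<in> {PI, PX}"
  shows "PS N p *\<^sub>v vP N = vP N"
proof (rule eq_vecI)
  fix r assume "r < dim_vec (vP N)"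
  then have r: "r < 2^N" by (simp add: vP_def)
  have "(PS N p *\<^sub>v vP N) $ r = (\<Sum>c\<in>{0..<(2::nat)^N}. PS N p $$ (r,c) * vP N $ c)"
    by (rule mv_idx[OF PS_carrier vP_carrier r])
  also have "\<dots> = (\<Sum>c\<in>{0..<(2::nat)^N}. PS N p $$ (r,c) * sP N)"
    by (intro sum.cong refl) (simp add: vP_idx)
  also have "\<dots> = (\<Sum>c\<in>{0..<(2::nat)^N}. \<Prod>i<N. pauli1_entry (p i) (qbit r i) (qbit c i)) * sP N"
    by (simp add: sum_distrib_right PS_idx r)
  also have "\<dots> = (\<Prod>i<N. pauli1_entry (p i) (qbit r i) 0 + pauli1_entry (p i) (qbit r i) 1) * sP N"
    by (simp only: bitprod[of "\<lambda>i b. pauli1_entry (p i) (qbit r i) b"])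
  also have "(\<Prod>i<N. pauli1_entry (p i) (qbit r i) 0 + pauli1_entry (p i) (qbit r i) 1) = 1"
  proof (rule prod.neutral, intro ballI)
    fix i assume "i \<in> {..<N}"
    then have "p i \<in> {PI, PX}" using p by simp
    then show "pauli1_entry (p i) (qbit r i) 0 + pauli1_entry (p i) (qbit r i) 1 = 1"
      by (rule e_IX[OF _ qbit_lt2])
  qed
  also have "1 * sP N = sP N" by simp
  also have "\<dots> = vP N $ r" using r by (simp add: vP_def)
  finally show "(PS N p *\<^sub>v vP N) $ r = vP N $ r" .
qed (simp add: vP_def)

lemma vP_stab: "stabilizer_state N (vP N)"
proof (rule stab_from_family[OF vP_state _ card_D[of PI PX N]])
  show "PiE {..<N} (\<lambda>_. {PI, PX}) \<subseteq> Ps N" by (auto simp: PiE_def)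
  fix p assume "p \<in> PiE {..<N} (\<lambda>_. {PI, PX})"
  then have "\<And>i. i < N \<Longrightarrow> p i \<in> {PI, PX}" by auto
  then show "PS N p *\<^sub>v vP N = vP N" by (rule fixP)
qed simp

lemma vP_energy:
  assumes G: "simple_graph N E"
  shows "expect (ising_H N E g) (vP N) = - complex_of_real g * of_nat N"
proof -
  have x: "expect (PS N (Xs i)) (vP N) = 1" for i
  proof -
    have "(\<Sum>r\<in>{0..<(2::nat)^N}. \<Sum>c\<in>{0..<(2::nat)^N}. PS N (Xs i) $$ (r,c))
        = (\<Sum>r\<in>{0..<(2::nat)^N}. \<Sum>c\<in>{0..<(2::nat)^N}. \<Prod>k<N. pauli1_entry (Xs i k) (qbit r k) (qbit c k))"
      by (intro sum.cong refl) (simp add: PS_idx)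
    also have "\<dots> = (\<Prod>k<N. pauli1_entry (Xs i k) 0 0 + pauli1_entry (Xs i k) 0 1 + (pauli1_entry (Xs i k) 1 0 + pauli1_entry (Xs i k) 1 1))"
      by (rule bitprod2[of "\<lambda>k a b. pauli1_entry (Xs i k) a b"])
    also have "\<dots> = (\<Prod>k<N. 2)" by (intro prod.cong refl) (simp add: Xs_def)
    finally show ?thesis by (simp add: expP)
  qed
  have z: "expect (PS N (Zs e)) (vP N) = 0" if e: "e \<in> E" for e
  proof -
    obtain j where j: "j \<in> e" "j < N" using G e unfolding simple_graph_def
      by (metis atLeastLessThan_iff card.empty ex_in_conv subsetD zero_neq_numeral)
    have "(\<Sum>r\<in>{0..<(2::nat)^N}. \<Sum>c\<in>{0..<(2::nat)^N}. PS N (Zs e) $$ (r,c))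
        = (\<Sum>r\<in>{0..<(2::nat)^N}. \<Sum>c\<in>{0..<(2::nat)^N}. \<Prod>k<N. pauli1_entry (Zs e k) (qbit r k) (qbit c k))"
      by (intro sum.cong refl) (simp add: PS_idx)
    also have "\<dots> = (\<Prod>k<N. pauli1_entry (Zs e k) 0 0 + pauli1_entry (Zs e k) 0 1 + (pauli1_entry (Zs e k) 1 0 + pauli1_entry (Zs e k) 1 1))"
      by (rule bitprod2[of "\<lambda>k a b. pauli1_entry (Zs e k) a b"])
    also have "\<dots> = 0" by (subst prod_zero_iff) (use j in \<open>auto simp: Zs_def\<close>)
    finally show ?thesis by (simp add: expP)
  qed
  show ?thesis unfolding EXPH[OF vP_carrier] using z by (simp add: x)
qed



lemma final_arith:
  fixes a g EN Ek :: real and N k :: nat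
  assumes N: "N > 0" and kN: "k \<le> N" and aN: "a * real N = EN" and g: "g \<ge> 0"
    and E0: "k = N \<Longrightarrow> Ek = 0" and EN: "k = 0 \<Longrightarrow> Ek = EN"
    and Eb: "0 < k \<Longrightarrow> k < N \<Longrightarrow> Ek \<le> real (N - k) * a"
  shows "(if g \<le> a then - EN else - g * real N) \<le> - Ek - g * real k"
proof (cases "k = 0")
  case True
  then show ?thesis using EN aN
    by (auto simp: not_le intro: mult_strict_right_mono[of a g "real N"] dest: mult_strict_right_mono[of a g "real N"] simp add: N)
next
  case k0: False
  show ?thesis
  proof (cases "k = N")
    case True
    have "g \<le> a \<Longrightarrow> g * real N \<le> a * real N" by (rule mult_right_mono) simp_all
    then show ?thesis using True E0 aN by auto
  next
    case False
    then have kN': "k < N" using kN by simp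
    have n: "real (N - k) = real N - real k" using kN by simp
    have b: "Ek \<le> (real N - real k) * a" using Eb[OF _ kN'] k0 n by simp
    show ?thesis
    proof (cases "g \<le> a")
      case True
      have "g * real k \<le> a * real k" by (rule mult_right_mono[OF True]) simp
      then show ?thesis using True b aN by (simp add: algebra_simps)
    next
      case False
      have "(real N - real k) * a \<le> (real N - real k) * g"
        by (rule mult_left_mono) (use False kN' in auto)
      then show ?thesis using False b by (simp add: algebra_simps)
    qed
  qed
qed

theorem mainTheorem8:
  fixes N :: nat and E :: "nat set set" and g :: real
  assumes graph: "simple_graph N E"
    and N_pos: "N > 0"
    and dens: "\<forall>n. 0 < n \<and> n < N \<longrightarrow>
                 real (edge_fun N E N) / real N \<ge> real (edge_fun N E n) / real n"
    and g_nonneg: "g \<ge> 0"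
  shows "Min ((\<lambda>n. (real (edge_fun N E N) - real (edge_fun N E n)) / (real N - real n)) ` {0..<N})
           = real (edge_fun N E N) / real N
         \<and> (let m = (if g \<le> real (edge_fun N E N) / real N
                  then - real (edge_fun N E N) else - g * real N)
         in (\<exists>\<phi>. stabilizer_state N \<phi> \<and> Re (expect (ising_H N E g) \<phi>) = m)
          \<and> (\<forall>\<phi>. stabilizer_state N \<phi> \<longrightarrow> m \<le> Re (expect (ising_H N E g) \<phi>)))"
proof -
  define EN where "EN = real (edge_fun N E N)"
  define a where "a = EN / real N"
  have aN: "a * real N = EN" unfolding a_def using N_pos by simp
  have EF0: "edge_fun N E 0 = 0" by (rule EF_0[OF graph])
  have ENc: "EN = real (card E)" unfolding EN_def using EF_N[OF graph] by simp
  have db: "real (edge_fun N E n) \<le> real n * a" if "0 < n" "n < N" for n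
  proof -
    have "real (edge_fun N E n) / real n \<le> a" using dens that unfolding a_def EN_def by blast
    then show ?thesis using that by (simp add: pos_divide_le_eq mult.commute)
  qed
  let ?f = "\<lambda>n. (real (edge_fun N E N) - real (edge_fun N E n)) / (real N - real n)"
  have part1: "Min (?f ` {0..<N}) = a"
  proof (rule Min_eqI)
    show "finite (?f ` {0..<N})" by simp
    show "a \<in> ?f ` {0..<N}"
    proof
      show "a = ?f 0" unfolding a_def EN_def using EF0 by simp
      show "0 \<in> {0..<N}" using N_pos by simp
    qed
    fix y assume "y \<in> ?f ` {0..<N}"
    then obtain n where n: "n < N" and y: "y = ?f n" by auto
    show "a \<le> y"
    proof (cases "n = 0")
      case True then show ?thesis using y EF0 unfolding a_def EN_def by simp
    next
      case False
      have pos: "0 < real N - real n" using n by simp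
      have "a * (real N - real n) \<le> EN - real (edge_fun N E n)"
        using db[of n] False n aN by (simp add: algebra_simps)
      then show ?thesis unfolding y EN_def using pos by (simp add: pos_le_divide_eq)
    qed
  qed
  define m where "m = (if g \<le> a then - EN else - g * real N)"
  have ex: "\<exists>\<phi>. stabilizer_state N \<phi> \<and> Re (expect (ising_H N E g) \<phi>) = m"
  proof (cases "g \<le> a")
    case True
    have "Re (expect (ising_H N E g) (v0 N)) = m" unfolding m_def using True ENc by (simp add: v0_energy)
    then show ?thesis using v0_stab by blast
  next
    case False
    have "Re (expect (ising_H N E g) (vP N)) = m" unfolding m_def using False by (simp add: vP_energy[OF graph])
    then show ?thesis using vP_stab by blast
  qed
  have lb: "\<forall>\<phi>. stabilizer_state N \<phi> \<longrightarrow> m \<le> Re (expect (ising_H N E g) \<phi>)"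
  proof (intro allI impI)
    fix \<phi> assume st: "stabilizer_state N \<phi>"
    obtain k where kN: "k \<le> N" and k: "- real (edge_fun N E (N - k)) - g * real k \<le> Re (expect (ising_H N E g) \<phi>)"
      using LB[OF st graph g_nonneg] by blast
    have "m \<le> - real (edge_fun N E (N - k)) - g * real k"
      unfolding m_def
    proof (rule final_arith[OF N_pos kN aN g_nonneg])
      show "k = N \<Longrightarrow> real (edge_fun N E (N - k)) = 0" using EF0 by simp
      show "k = 0 \<Longrightarrow> real (edge_fun N E (N - k)) = EN" unfolding EN_def by simp
      show "0 < k \<Longrightarrow> k < N \<Longrightarrow> real (edge_fun N E (N - k)) \<le> real (N - k) * a"
        by (rule db) auto
    qed
    then show "m \<le> Re (expect (ising_H N E g) \<phi>)" using k by linarith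
  qed
  show ?thesis
    unfolding Let_def using part1 ex lb unfolding m_def a_def EN_def by blast
qed


end
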